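(* Let $A,M\in\mathbb{R}^{n\times n}$ with $M$ nonsingular, $B\in\mathbb{R}^{n\times r}$, and shifts $\alpha_1,\ldots,\alpha_j\in\mathbb{C}$ with $\mathrm{Re}(\alpha_i)<0$. Run $j$ steps of the inexact LR-ADI iteration described in the context, producing $v_i,s_i,w_i$ and $Z_j$. Then $$AZ_j=MZ_jT_j+w_jg_j^*-S_j\Gamma_j,\qquad S_j:=[s_1,\ldots,s_j],$$ where $T_j=\tilde T_j\otimes I_r$ with $\tilde T_j\in\mathbb{C}^{j\times j}$ lower triangular, $(\tilde T_j)_{ii}=\overline{\alpha_i}$, $(\tilde T_j)_{ik}=-\gamma_i\gamma_k$ for $i>k$; $g_j:=[\gamma_1,\ldots,\gamma_j]^T\otimes I_r$; and $\Gamma_j:=\mathrm{diag}(\gamma_1,\ldots,\gamma_j)\otimes I_r$. Moreover, $$AZ_jZ_j^*M^*+MZ_jZ_j^*A^*+BB^*=-S_j\Gamma_jZ_j^*M^*-MZ_j\Gamma_jS_j^*+w_jw_j^*.$$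
   Context: Inexact LR-ADI iteration: $w_0:=B$, $\gamma_i:=\sqrt{-2\,\mathrm{Re}(\alpha_i)}$; for $i=1,\ldots,j$, $v_i\in\mathbb{C}^{n\times r}$ is an arbitrary (approximate) solution of $(A+\alpha_iM)v=w_{i-1}$ with residual $s_i:=w_{i-1}-(A+\alpha_iM)v_i$, and $w_i:=w_{i-1}+\gamma_i^2Mv_i$; $Z_j:=[\gamma_1v_1,\ldots,\gamma_jv_j]\in\mathbb{C}^{n\times jr}$. $^*$ is conjugate transpose, $\overline{\alpha}$ complex conjugate, $\otimes$ the Kronecker product. *)

theory Defs
  imports "Jordan_Normal_Form.Matrix"
begin

definition adj :: "complex mat \<Rightarrow> complex mat" where
  "adj X = mat (dim_col X) (dim_row X) (\<lambda>(i,k). cnj (X $$ (k,i)))"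

definition kron :: "complex mat \<Rightarrow> complex mat \<Rightarrow> complex mat" where
  "kron X Y = mat (dim_row X * dim_row Y) (dim_col X * dim_col Y)
     (\<lambda>(i,k). X $$ (i div dim_row Y, k div dim_col Y) * Y $$ (i mod dim_row Y, k mod dim_col Y))"

definition cmat :: "real mat \<Rightarrow> complex mat" where
  "cmat X = map_mat complex_of_real X"

text \<open>gamma_i = sqrt(-2 Re alpha_i) (shifts are indexed from 1).\<close>
definition gam :: "(nat \<Rightarrow> complex) \<Rightarrow> nat \<Rightarrow> complex" where
  "gam \<alpha> i = complex_of_real (sqrt (- 2 * Re (\<alpha> i)))"

primrec adi_w :: "complex mat \<Rightarrow> complex mat \<Rightarrow> (nat \<Rightarrow> complex) \<Rightarrow> (nat \<Rightarrow> complex mat) \<Rightarrow> nat \<Rightarrow> complex mat" where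
  "adi_w M B \<alpha> v 0 = B"
| "adi_w M B \<alpha> v (Suc i) = adi_w M B \<alpha> v i + (gam \<alpha> (Suc i))\<^sup>2 \<cdot>\<^sub>m (M * v (Suc i))"

definition adi_s :: "complex mat \<Rightarrow> complex mat \<Rightarrow> complex mat \<Rightarrow> (nat \<Rightarrow> complex) \<Rightarrow> (nat \<Rightarrow> complex mat) \<Rightarrow> nat \<Rightarrow> complex mat" where
  "adi_s A M B \<alpha> v i = adi_w M B \<alpha> v (i - 1) - (A + \<alpha> i \<cdot>\<^sub>m M) * v i"

text \<open>Z_j = [gamma_1 v_1, ..., gamma_j v_j] (n x jr).\<close>
definition adi_Z :: "nat \<Rightarrow> nat \<Rightarrow> (nat \<Rightarrow> complex) \<Rightarrow> (nat \<Rightarrow> complex mat) \<Rightarrow> nat \<Rightarrow> complex mat" where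
  "adi_Z n r \<alpha> v j = mat n (j * r) (\<lambda>(p,q). gam \<alpha> (q div r + 1) * v (q div r + 1) $$ (p, q mod r))"

text \<open>S_j = [s_1, ..., s_j] (n x jr).\<close>
definition adi_S :: "nat \<Rightarrow> nat \<Rightarrow> complex mat \<Rightarrow> complex mat \<Rightarrow> complex mat \<Rightarrow> (nat \<Rightarrow> complex) \<Rightarrow> (nat \<Rightarrow> complex mat) \<Rightarrow> nat \<Rightarrow> complex mat" where
  "adi_S n r A M B \<alpha> v j = mat n (j * r) (\<lambda>(p,q). adi_s A M B \<alpha> v (q div r + 1) $$ (p, q mod r))"

text \<open>The lower triangular j x j matrix tilde T_j (0-based indices, shift i+1).\<close>
definition Ttil :: "(nat \<Rightarrow> complex) \<Rightarrow> nat \<Rightarrow> complex mat" where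
  "Ttil \<alpha> j = mat j j (\<lambda>(i,k). if i = k then cnj (\<alpha> (i+1))
                          else if k < i then - (gam \<alpha> (i+1) * gam \<alpha> (k+1)) else 0)"

definition adi_T :: "nat \<Rightarrow> (nat \<Rightarrow> complex) \<Rightarrow> nat \<Rightarrow> complex mat" where
  "adi_T r \<alpha> j = kron (Ttil \<alpha> j) (1\<^sub>m r)"

definition adi_g :: "nat \<Rightarrow> (nat \<Rightarrow> complex) \<Rightarrow> nat \<Rightarrow> complex mat" where
  "adi_g r \<alpha> j = kron (mat j 1 (\<lambda>(i,_). gam \<alpha> (i+1))) (1\<^sub>m r)"

definition adi_Gamma :: "nat \<Rightarrow> (nat \<Rightarrow> complex) \<Rightarrow> nat \<Rightarrow> complex mat" where
  "adi_Gamma r \<alpha> j = kron (mat j j (\<lambda>(i,k). if i = k then gam \<alpha> (i+1) else 0)) (1\<^sub>m r)"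

end

theory Submission imports Defs begin

lemma sum_block: "(\<Sum>m<(a::nat)*r. f m) = (\<Sum>i<a. \<Sum>c<r. f (i*r + c))"
proof (induction a)
  case 0 then show ?case by simp
next
  case (Suc a)
  have e: "{..<Suc a * r} = {..<a*r} \<union> {a*r..<a*r+r}" by auto
  have "(\<Sum>m<Suc a*r. f m) = (\<Sum>m<a*r. f m) + (\<Sum>m\<in>{a*r..<a*r+r}. f m)"
    unfolding e by (rule sum.union_disjoint) auto
  also have "(\<Sum>m\<in>{a*r..<a*r+r}. f m) = (\<Sum>c\<in>{0+a*r..<r+a*r}. f c)"
    by (simp add: add.commute)
  also have "\<dots> = (\<Sum>c\<in>{0..<r}. f (c + a*r))"
    by (rule sum.shift_bounds_nat_ivl)
  also have "\<dots> = (\<Sum>c<r. f (a*r + c))"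
    by (simp add: atLeast0LessThan add.commute)
  finally show ?case using Suc by simp
qed

lemma index_mult': assumes "X \<in> carrier_mat a b" "Y \<in> carrier_mat b c" "i < a" "k < c"
  shows "(X*Y) $$ (i,k) = (\<Sum>m<b. X $$ (i,m) * Y $$ (m,k))"
  using assms by (simp add: scalar_prod_def atLeast0LessThan)

lemma blk_lt: assumes "i < (a::nat)" "c < r" shows "i*r+c < a*r"
proof -
  have "(i+1)*r \<le> a*r" using assms(1) by (intro mult_le_mono1) simp
  then show ?thesis using assms(2) by simp
qed

lemma kron_one_carrier: "Y \<in> carrier_mat a b \<Longrightarrow> kron Y (1\<^sub>m r) \<in> carrier_mat (a*r) (b*r)"
  by (simp add: kron_def)

lemma kron_one_index: assumes "Y \<in> carrier_mat a b" "i < a" "k < b" "c < r" "d < r"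
  shows "kron Y (1\<^sub>m r) $$ (i*r+c, k*r+d) = Y $$ (i,k) * (if c = d then 1 else 0)"
proof -
  have "i*r+c < a*r" using assms(2,4) by (rule blk_lt)
  moreover have "k*r+d < b*r" using assms(3,5) by (rule blk_lt)
  ultimately show ?thesis using assms by (simp add: kron_def)
qed

lemma sum_kron: assumes "Y \<in> carrier_mat a b" "q < b*r"
  shows "(\<Sum>m<a*r. f m * kron Y (1\<^sub>m r) $$ (m,q)) = (\<Sum>i<a. f (i*r + q mod r) * Y $$ (i, q div r))"
proof -
  have r: "r > 0" using assms by (cases r) auto
  have qd: "q div r < b" using assms by (simp add: less_mult_imp_div_less)
  have qm: "q mod r < r" using r by simp
  have qe: "q = (q div r) * r + q mod r" by simp
  have "(\<Sum>m<a*r. f m * kron Y (1\<^sub>m r) $$ (m,q)) = (\<Sum>i<a. \<Sum>c<r. f (i*r+c) * kron Y (1\<^sub>m r) $$ (i*r+c,q))"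
    by (rule sum_block)
  also have "\<dots> = (\<Sum>i<a. \<Sum>c<r. f (i*r+c) * (Y $$ (i, q div r) * (if c = q mod r then 1 else 0)))"
  proof (intro sum.cong refl)
    fix i c assume "i \<in> {..<a}" "c \<in> {..<r}"
    then show "f (i*r+c) * kron Y (1\<^sub>m r) $$ (i*r+c,q) = f (i*r+c) * (Y $$ (i, q div r) * (if c = q mod r then 1 else 0))"
      using kron_one_index[OF assms(1) _ qd _ qm, of i c] by (simp only: qe[symmetric]) auto
  qed
  also have "\<dots> = (\<Sum>i<a. f (i*r + q mod r) * Y $$ (i, q div r))"
    using qm by (simp add: if_distrib cong: if_cong)
  finally show ?thesis .
qed


lemma adj_carrier[simp]: "X \<in> carrier_mat a b \<Longrightarrow> adj X \<in> carrier_mat b a"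
  by (simp add: adj_def)
lemma adj_dim[simp]: "dim_row (adj X) = dim_col X" "dim_col (adj X) = dim_row X"
  by (simp_all add: adj_def)
lemma adj_index[simp]: "i < dim_col X \<Longrightarrow> k < dim_row X \<Longrightarrow> adj X $$ (i,k) = cnj (X $$ (k,i))"
  by (simp add: adj_def)

lemma adj_mult: assumes "X \<in> carrier_mat a b" "Y \<in> carrier_mat b c"
  shows "adj (X*Y) = adj Y * adj X"
proof (rule eq_matI)
  fix i k assume ik: "i < dim_row (adj Y * adj X)" "k < dim_col (adj Y * adj X)"
  then have i: "i < c" and k: "k < a" using assms by auto
  have "adj (X*Y) $$ (i,k) = cnj (\<Sum>m<b. X $$ (k,m) * Y $$ (m,i))"
    using assms i k by (simp add: index_mult'[OF assms k i])
  also have "\<dots> = (\<Sum>m<b. adj Y $$ (i,m) * adj X $$ (m,k))"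
    using assms i k by (simp add: cnj_sum mult.commute)
  also have "\<dots> = (adj Y * adj X) $$ (i,k)"
    by (rule index_mult'[symmetric]) (use assms i k in auto)
  finally show "adj (X*Y) $$ (i,k) = (adj Y * adj X) $$ (i,k)" .
qed (use assms in auto)

lemma adj_add: assumes "X \<in> carrier_mat a b" "Y \<in> carrier_mat a b"
  shows "adj (X+Y) = adj X + adj Y"
  by (rule eq_matI) (use assms in auto)
lemma adj_minus: assumes "X \<in> carrier_mat a b" "Y \<in> carrier_mat a b"
  shows "adj (X-Y) = adj X - adj Y"
  by (rule eq_matI) (use assms in auto)
lemma adj_uminus: "adj (-X) = - adj X"
  by (rule eq_matI) auto
lemma adj_adj[simp]: "adj (adj X) = X"
  by (rule eq_matI) auto

lemma lin: "(x::complex) + y = a - b - (c - d) \<Longrightarrow> c + (x + (y + (b + (- a - d)))) = 0"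
  by (simp add: algebra_simps)

lemma alg:
  fixes P T G Gm S w B AZ :: "complex mat"
  assumes c: "P \<in> carrier_mat n m" "T \<in> carrier_mat m m" "G \<in> carrier_mat m r" "Gm \<in> carrier_mat m m"
    "S \<in> carrier_mat n m" "w \<in> carrier_mat n r" "B \<in> carrier_mat n r"
  and e1: "AZ = P*T + w*adj G - S*Gm"
  and e2: "T + adj T = -(G*adj G)"
  and e3: "P*G = w - B"
  and e4: "adj Gm = Gm"
  shows "AZ*adj P + P*adj AZ + B*adj B = -(S*Gm*adj P) - P*Gm*adj S + w*adj w"
proof -
  have cc: "adj T * adj P \<in> carrier_mat m n" "G * adj w \<in> carrier_mat m n" "Gm*adj S \<in> carrier_mat m n"
    "P*T \<in> carrier_mat n m" "w*adj G \<in> carrier_mat n m" "S*Gm \<in> carrier_mat n m"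
    "adj T \<in> carrier_mat m m" "adj P \<in> carrier_mat m n" "adj w \<in> carrier_mat r n" "adj S \<in> carrier_mat m n"
    "adj G \<in> carrier_mat r m" "adj B \<in> carrier_mat r n"
    "adj T * adj P + G * adj w \<in> carrier_mat m n" "P*T + w*adj G \<in> carrier_mat n m"
    using c by auto
  have cAZ: "AZ \<in> carrier_mat n m" using c e1 by auto
  have "adj AZ = adj T * adj P + G * adj w - Gm * adj S"
    using c by (simp add: e1 adj_minus[of _ n m] adj_add[of _ n m] adj_mult[of _ n m] adj_mult[of w n r "adj G" m] e4)
  then have h2: "P*adj AZ = P*adj T*adj P + P*G*adj w - P*Gm*adj S"
    using c cc by (simp add: mult_minus_distrib_mat[OF c(1) cc(13) cc(3)] mult_add_distrib_mat[OF c(1) cc(1) cc(2)] assoc_mult_mat[OF c(1) cc(7) cc(8)] assoc_mult_mat[OF c(1) c(3) cc(9)] assoc_mult_mat[OF c(1) c(4) cc(10)])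
  have h1: "AZ*adj P = P*T*adj P + w*adj (P*G) - S*Gm*adj P"
    using c cc by (simp add: e1 add_mult_distrib_mat[OF cc(4) cc(5) cc(8)] minus_mult_distrib_mat[OF cc(14) cc(6) cc(8)] adj_mult[of _ n m] assoc_mult_mat[OF c(6) cc(11) cc(8)])
  have h3: "P*T*adj P + P*adj T*adj P = - ((P*G)*adj (P*G))"
  proof -
    have "P*T*adj P + P*adj T*adj P = P*(T + adj T)*adj P"
      using c cc by (simp add: mult_add_distrib_mat[OF c(1) c(2) cc(7)] add_mult_distrib_mat[OF _ _ cc(8), of _ n])
    also have "\<dots> = - ((P*G)*adj (P*G))"
      using c cc by (simp add: e2 adj_mult[of _ n m] assoc_mult_mat[OF c(1) mult_carrier_mat[OF c(3) cc(11)] cc(8)]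
        assoc_mult_mat[OF c(3) cc(11) cc(8)] assoc_mult_mat[OF c(1) c(3) mult_carrier_mat[OF cc(11) cc(8)]])
    finally show ?thesis .
  qed
  define D where "D = w - B"
  have cD: "D \<in> carrier_mat n r" using c unfolding D_def carrier_mat_def by auto
  have aD: "adj D = adj w - adj B" using c by (simp add: D_def adj_minus[of _ n r])
  have x1: "D * adj D = w*adj w - w*adj B - (B*adj w - B*adj B)"
  proof -
    have "D*adj D = w*adj D - B*adj D" using cD unfolding D_def
      by (intro minus_mult_distrib_mat[OF c(6) c(7), where nc=n]) simp
    then show ?thesis by (simp add: aD mult_minus_distrib_mat[OF c(6) cc(9) cc(12)] mult_minus_distrib_mat[OF c(7) cc(9) cc(12)])
  qed
  have x2: "w * adj D = w*adj w - w*adj B"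
    using c cD by (simp add: aD mult_minus_distrib_mat[OF c(6) cc(9) cc(12)])
  have x3: "D * adj w = w*adj w - B*adj w"
    using c cD by (simp add: D_def minus_mult_distrib_mat[OF c(6) c(7) cc(9)])
  have "AZ*adj P + P*adj AZ + B*adj B
     = (P*T*adj P + w*adj D - S*Gm*adj P) + (P*adj T*adj P + D*adj w - P*Gm*adj S) + B*adj B"
    using h1 h2 e3 D_def by simp
  also have "\<dots> = -(S*Gm*adj P) - P*Gm*adj S + w*adj w"
  proof (rule eq_matI)
    fix i k assume "i < dim_row (-(S*Gm*adj P) - P*Gm*adj S + w*adj w)" "k < dim_col (-(S*Gm*adj P) - P*Gm*adj S + w*adj w)"
    then have i: "i < n" and k: "k < n" using c by auto
    have eq: "(P*T*adj P + P*adj T*adj P) $$ (i,k) = (- (D*adj D)) $$ (i,k)" using h3 e3 D_def by simp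
    show "((P*T*adj P + w*adj D - S*Gm*adj P) + (P*adj T*adj P + D*adj w - P*Gm*adj S) + B*adj B) $$ (i,k)
      = (-(S*Gm*adj P) - P*Gm*adj S + w*adj w) $$ (i,k)"
      using eq c cD i k by (simp add: x1 x2 x3) (erule lin)
  qed (use c in auto)
  finally show ?thesis .
qed


lemma gam_real[simp]: "cnj (gam \<alpha> i) = gam \<alpha> i"
  by (simp add: gam_def)

lemma gam_sq: assumes "Re (\<alpha> i) \<le> 0" shows "cnj (\<alpha> i) + (gam \<alpha> i)^2 + \<alpha> i = 0"
proof -
  have "(gam \<alpha> i)^2 = complex_of_real ((sqrt (- 2 * Re (\<alpha> i)))^2)"
    unfolding gam_def by (rule of_real_power[symmetric])
  also have "\<dots> = complex_of_real (- 2 * Re (\<alpha> i))"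
    using assms by simp
  finally have "(gam \<alpha> i)^2 = complex_of_real (- 2 * Re (\<alpha> i))" .
  moreover have "cnj (\<alpha> i) + \<alpha> i = complex_of_real (2 * Re (\<alpha> i))"
    using complex_add_cnj[of "\<alpha> i"] by (simp add: add.commute)
  ultimately show ?thesis by (simp add: algebra_simps)
qed

lemma Z_carrier[simp]: "adi_Z n r \<alpha> v j \<in> carrier_mat n (j*r)"
  by (simp add: adi_Z_def)
lemma S_carrier[simp]: "adi_S n r A M B \<alpha> v j \<in> carrier_mat n (j*r)"
  by (simp add: adi_S_def)
lemma Z_idx: "p < n \<Longrightarrow> q < j*r \<Longrightarrow> adi_Z n r \<alpha> v j $$ (p,q) = gam \<alpha> (q div r + 1) * v (q div r + 1) $$ (p, q mod r)"
  by (simp add: adi_Z_def)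
lemma S_idx: "p < n \<Longrightarrow> q < j*r \<Longrightarrow> adi_S n r A M B \<alpha> v j $$ (p,q) = adi_s A M B \<alpha> v (q div r + 1) $$ (p, q mod r)"
  by (simp add: adi_S_def)

lemma divmod_facts: assumes "q < j*(r::nat)" shows "r > 0" "q div r < j" "q mod r < r"
proof -
  show r: "r > 0" using assms by (cases r) auto
  show "q div r < j" using assms by (simp add: less_mult_imp_div_less)
  show "q mod r < r" using r by simp
qed

lemma XZ: assumes X: "X \<in> carrier_mat n n" and vc: "\<forall>i\<in>{1..j}. v i \<in> carrier_mat n r"
  and p: "p < n" and q: "q < j*r"
  shows "(X * adi_Z n r \<alpha> v j) $$ (p,q) = gam \<alpha> (q div r + 1) * (X * v (q div r + 1)) $$ (p, q mod r)"
proof -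
  note d = divmod_facts[OF q]
  have v: "v (q div r + 1) \<in> carrier_mat n r" using vc d by auto
  have "(X * adi_Z n r \<alpha> v j) $$ (p,q) = (\<Sum>l<n. X $$ (p,l) * adi_Z n r \<alpha> v j $$ (l,q))"
    by (rule index_mult'[OF X Z_carrier p q])
  also have "\<dots> = (\<Sum>l<n. gam \<alpha> (q div r + 1) * (X $$ (p,l) * v (q div r + 1) $$ (l, q mod r)))"
    by (intro sum.cong refl) (simp add: Z_idx q)
  also have "\<dots> = gam \<alpha> (q div r + 1) * (X * v (q div r + 1)) $$ (p, q mod r)"
    by (simp only: index_mult'[OF X v p d(3)] sum_distrib_left)
  finally show ?thesis .
qed

lemma w_carrier: assumes "M \<in> carrier_mat n n" "B \<in> carrier_mat n r" "\<forall>i\<in>{1..j}. v i \<in> carrier_mat n r"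
  shows "i \<le> j \<Longrightarrow> adi_w M B \<alpha> v i \<in> carrier_mat n r"
  by (induction i) (use assms in auto)

lemma w_idx: assumes M: "M \<in> carrier_mat n n" and B: "B \<in> carrier_mat n r" and vc: "\<forall>i\<in>{1..j}. v i \<in> carrier_mat n r"
  and p: "p < n" and c: "c < r"
  shows "i \<le> j \<Longrightarrow> adi_w M B \<alpha> v i $$ (p,c) = B $$ (p,c) + (\<Sum>l<i. (gam \<alpha> (l+1))^2 * (M * v (l+1)) $$ (p,c))"
proof (induction i)
  case 0 then show ?case by simp
next
  case (Suc i)
  have v: "v (Suc i) \<in> carrier_mat n r" using vc Suc by auto
  show ?case using Suc v M p c by simp
qed

lemma s_idx: assumes A: "A \<in> carrier_mat n n" and M: "M \<in> carrier_mat n n" and B: "B \<in> carrier_mat n r"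
  and vc: "\<forall>i\<in>{1..j}. v i \<in> carrier_mat n r" and k: "k < j" and p: "p < n" and c: "c < r"
  shows "adi_s A M B \<alpha> v (k+1) $$ (p,c) = adi_w M B \<alpha> v k $$ (p,c) - (A * v (k+1)) $$ (p,c) - \<alpha> (k+1) * (M * v (k+1)) $$ (p,c)"
proof -
  have v: "v (k+1) \<in> carrier_mat n r" using vc k by auto
  have AM: "A + \<alpha> (k+1) \<cdot>\<^sub>m M \<in> carrier_mat n n" using A M by simp
  have "((A + \<alpha> (k+1) \<cdot>\<^sub>m M) * v (k+1)) $$ (p,c) = (\<Sum>l<n. (A + \<alpha> (k+1) \<cdot>\<^sub>m M) $$ (p,l) * v (k+1) $$ (l,c))"
    by (rule index_mult'[OF AM v p c])
  also have "\<dots> = (\<Sum>l<n. A $$ (p,l) * v (k+1) $$ (l,c)) + \<alpha> (k+1) * (\<Sum>l<n. M $$ (p,l) * v (k+1) $$ (l,c))"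
    using A M p by (simp add: sum.distrib sum_distrib_left distrib_right mult.assoc)
  also have "\<dots> = (A * v (k+1)) $$ (p,c) + \<alpha> (k+1) * (M * v (k+1)) $$ (p,c)"
    by (simp only: index_mult'[OF A v p c] index_mult'[OF M v p c])
  finally have e: "((A + \<alpha> (k+1) \<cdot>\<^sub>m M) * v (k+1)) $$ (p,c) = (A * v (k+1)) $$ (p,c) + \<alpha> (k+1) * (M * v (k+1)) $$ (p,c)" .
  show ?thesis using e v A M p c by (simp add: adi_s_def)
qed


lemma scal:
  fixes g a :: "nat \<Rightarrow> complex"
  assumes k: "k < j" and key: "cnj al + (g k)^2 + al = 0"
  shows "g k * x = (\<Sum>i<j. g i * a i * (if i = k then cnj al else if k < i then - (g i * g k) else 0))
     + (b + (\<Sum>i<j. (g i)^2 * a i)) * g k - (b + (\<Sum>i<k. (g i)^2 * a i) - x - al * a k) * g k"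
proof -
  define ST where "ST = (\<Sum>i<j. g i * a i * (if i = k then cnj al else if k < i then - (g i * g k) else 0))"
  define SW where "SW = (\<Sum>i<j. (g i)^2 * a i)"
  define SK where "SK = (\<Sum>i<k. (g i)^2 * a i)"
  have s1: "SK = (\<Sum>i<j. if i \<in> {..<k} then (g i)^2 * a i else 0)"
    unfolding SK_def using sum.inter_restrict[of "{..<j}" "\<lambda>i. (g i)^2 * a i" "{..<k}"] k by (simp add: Int_absorb1)
  have "ST + SW * g k - SK * g k = (\<Sum>i<j. g i * a i * (if i = k then cnj al else if k < i then - (g i * g k) else 0)
        + (g i)^2 * a i * g k - (if i \<in> {..<k} then (g i)^2 * a i else 0) * g k)"
    unfolding ST_def SW_def s1 by (simp add: sum.distrib sum_subtractf sum_distrib_right)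
  also have "\<dots> = (\<Sum>i<j. if i = k then g k * a k * (cnj al + (g k)^2) else 0)"
    by (intro sum.cong refl) (auto simp: algebra_simps power2_eq_square)
  also have "\<dots> = g k * a k * (cnj al + (g k)^2)" using k by simp
  finally have h: "ST + SW * g k - SK * g k = g k * a k * (cnj al + (g k)^2)" .
  have "ST + (b + SW) * g k - (b + SK - x - al * a k) * g k = (ST + SW * g k - SK * g k) + g k * x + g k * a k * al"
    by (simp add: algebra_simps)
  also have "\<dots> = g k * x + g k * a k * (cnj al + (g k)^2 + al)"
    unfolding h by (simp add: algebra_simps)
  also have "\<dots> = g k * x" by (simp add: key)
  finally show ?thesis unfolding ST_def SW_def SK_def by simp
qed

lemma kron_idx: assumes "Y \<in> carrier_mat a b" "m < a*r" "q < b*r"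
  shows "kron Y (1\<^sub>m r) $$ (m,q) = Y $$ (m div r, q div r) * (if m mod r = q mod r then 1 else 0)"
proof -
  note d = divmod_facts[OF assms(2)]
  show ?thesis using assms d by (simp add: kron_def)
qed

lemma Ttil_carrier[simp]: "Ttil \<alpha> j \<in> carrier_mat j j" by (simp add: Ttil_def)
lemma T_carrier[simp]: "adi_T r \<alpha> j \<in> carrier_mat (j*r) (j*r)"
  unfolding adi_T_def by (rule kron_one_carrier) simp
lemma gcol_carrier[simp]: "mat j 1 (\<lambda>(i,_). gam \<alpha> (i+1)) \<in> carrier_mat j 1" by simp
lemma g_carrier[simp]: "adi_g r \<alpha> j \<in> carrier_mat (j*r) r"
  unfolding adi_g_def using kron_one_carrier[OF gcol_carrier, of j \<alpha> r] by simp
lemma Gd_carrier[simp]: "mat j j (\<lambda>(i,k). if i = k then gam \<alpha> (i+1) else 0) \<in> carrier_mat j j" by simp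
lemma Gamma_carrier[simp]: "adi_Gamma r \<alpha> j \<in> carrier_mat (j*r) (j*r)"
  unfolding adi_Gamma_def by (rule kron_one_carrier) simp

lemma dims[simp]: "dim_row (adi_T r \<alpha> j) = j*r" "dim_col (adi_T r \<alpha> j) = j*r"
  "dim_row (adi_g r \<alpha> j) = j*r" "dim_col (adi_g r \<alpha> j) = r"
  "dim_row (adi_Gamma r \<alpha> j) = j*r" "dim_col (adi_Gamma r \<alpha> j) = j*r"
  "dim_row (adi_Z n r \<alpha> v j) = n" "dim_col (adi_Z n r \<alpha> v j) = j*r"
  "dim_row (adi_S n r A M B \<alpha> v j) = n" "dim_col (adi_S n r A M B \<alpha> v j) = j*r"
  by (simp_all add: adi_T_def adi_g_def adi_Gamma_def adi_Z_def adi_S_def kron_def Ttil_def)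

lemma T_idx: "m < j*r \<Longrightarrow> q < j*r \<Longrightarrow> adi_T r \<alpha> j $$ (m,q) =
   Ttil \<alpha> j $$ (m div r, q div r) * (if m mod r = q mod r then 1 else 0)"
  unfolding adi_T_def by (rule kron_idx) auto
lemma g_idx: "m < j*r \<Longrightarrow> c < r \<Longrightarrow> adi_g r \<alpha> j $$ (m,c) =
   gam \<alpha> (m div r + 1) * (if m mod r = c then 1 else 0)"
  unfolding adi_g_def using kron_idx[OF gcol_carrier, of m j r c \<alpha>] divmod_facts[of m j r] by simp
lemma Gamma_idx: "m < j*r \<Longrightarrow> q < j*r \<Longrightarrow> adi_Gamma r \<alpha> j $$ (m,q) =
   (if m div r = q div r then gam \<alpha> (m div r + 1) else 0) * (if m mod r = q mod r then 1 else 0)"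
  unfolding adi_Gamma_def using kron_idx[OF Gd_carrier, of m j r q \<alpha>] divmod_facts[of m j r] divmod_facts[of q j r] by simp

lemma Gamma_adj: "adj (adi_Gamma r \<alpha> j) = adi_Gamma r \<alpha> j"
proof (rule eq_matI)
  fix m q assume "m < dim_row (adi_Gamma r \<alpha> j)" "q < dim_col (adi_Gamma r \<alpha> j)"
  then have m: "m < j*r" and q: "q < j*r" using Gamma_carrier[of r \<alpha> j] by auto
  show "adj (adi_Gamma r \<alpha> j) $$ (m,q) = adi_Gamma r \<alpha> j $$ (m,q)"
    using m q Gamma_carrier[of r \<alpha> j] by (auto simp: Gamma_idx)
qed (use Gamma_carrier in auto)

lemma T_adj: assumes "\<forall>i\<in>{1..j}. Re (\<alpha> i) < 0"
  shows "adi_T r \<alpha> j + adj (adi_T r \<alpha> j) = - (adi_g r \<alpha> j * adj (adi_g r \<alpha> j))"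
proof (rule eq_matI)
  fix m q assume "m < dim_row (- (adi_g r \<alpha> j * adj (adi_g r \<alpha> j)))" "q < dim_col (- (adi_g r \<alpha> j * adj (adi_g r \<alpha> j)))"
  then have m: "m < j*r" and q: "q < j*r" using g_carrier[of r \<alpha> j] by auto
  note dm = divmod_facts[OF m] and dq = divmod_facts[OF q]
  have "(adi_g r \<alpha> j * adj (adi_g r \<alpha> j)) $$ (m,q) = (\<Sum>l<r. adi_g r \<alpha> j $$ (m,l) * adj (adi_g r \<alpha> j) $$ (l,q))"
    by (rule index_mult'[OF g_carrier adj_carrier[OF g_carrier] m q])
  also have "\<dots> = (\<Sum>l<r. gam \<alpha> (m div r + 1) * gam \<alpha> (q div r + 1) * (if l = m mod r then (if l = q mod r then 1 else 0) else 0))"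
    by (intro sum.cong refl) (use m q g_carrier[of r \<alpha> j] in \<open>auto simp: g_idx\<close>)
  also have "\<dots> = gam \<alpha> (m div r + 1) * gam \<alpha> (q div r + 1) * (if m mod r = q mod r then 1 else 0)"
    using dm by (simp add: if_distrib[of "(*) _"] cong: if_cong)
  finally have gg: "(adi_g r \<alpha> j * adj (adi_g r \<alpha> j)) $$ (m,q) = gam \<alpha> (m div r + 1) * gam \<alpha> (q div r + 1) * (if m mod r = q mod r then 1 else 0)" .
  have key: "cnj (\<alpha> (m div r + 1)) + (gam \<alpha> (m div r + 1))^2 + \<alpha> (m div r + 1) = 0"
  proof -
    have "m div r + 1 \<in> {1..j}" using dm by auto
    then have "Re (\<alpha> (m div r + 1)) < 0" using assms by blast
    then show ?thesis by (intro gam_sq) simp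
  qed
  have "(adi_T r \<alpha> j + adj (adi_T r \<alpha> j)) $$ (m,q) = adi_T r \<alpha> j $$ (m,q) + cnj (adi_T r \<alpha> j $$ (q,m))"
    using m q T_carrier[of r \<alpha> j] by simp
  also have "\<dots> = (Ttil \<alpha> j $$ (m div r, q div r) + cnj (Ttil \<alpha> j $$ (q div r, m div r))) * (if m mod r = q mod r then 1 else 0)"
    using m q by (auto simp: T_idx)
  also have "\<dots> = - (gam \<alpha> (m div r + 1) * gam \<alpha> (q div r + 1) * (if m mod r = q mod r then 1 else 0))"
  proof -
    have key2: "cnj (\<alpha> (m div r + 1)) + \<alpha> (m div r + 1) = - (gam \<alpha> (m div r + 1) * gam \<alpha> (m div r + 1))"
      using key by (simp add: power2_eq_square eq_neg_iff_add_eq_0 algebra_simps)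
    have tt: "Ttil \<alpha> j $$ (m div r, q div r) + cnj (Ttil \<alpha> j $$ (q div r, m div r)) = - (gam \<alpha> (m div r + 1) * gam \<alpha> (q div r + 1))"
    proof (cases "m div r = q div r")
      case True then show ?thesis using key2 dm dq by (simp add: Ttil_def)
    next
      case False then show ?thesis using dm dq by (cases "m div r < q div r") (auto simp: Ttil_def mult.commute)
    qed
    show ?thesis by (simp only: tt) simp
  qed
  finally show "(adi_T r \<alpha> j + adj (adi_T r \<alpha> j)) $$ (m,q) = (- (adi_g r \<alpha> j * adj (adi_g r \<alpha> j))) $$ (m,q)"
    using gg m q g_carrier[of r \<alpha> j] by simp
qed (use g_carrier in auto)


lemma blk_divmod: "c < (r::nat) \<Longrightarrow> (i*r+c) div r = i \<and> (i*r+c) mod r = c"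
  by simp

lemma PG: assumes M: "M \<in> carrier_mat n n" and B: "B \<in> carrier_mat n r"
  and vc: "\<forall>i\<in>{1..j}. v i \<in> carrier_mat n r"
  shows "M * adi_Z n r \<alpha> v j * adi_g r \<alpha> j = adi_w M B \<alpha> v j - B"
proof (rule eq_matI)
  fix p c assume "p < dim_row (adi_w M B \<alpha> v j - B)" "c < dim_col (adi_w M B \<alpha> v j - B)"
  then have p: "p < n" and c: "c < r" using B by auto
  have MZ: "M * adi_Z n r \<alpha> v j \<in> carrier_mat n (j*r)" using M by simp
  have "(M * adi_Z n r \<alpha> v j * adi_g r \<alpha> j) $$ (p,c) = (\<Sum>m<j*r. (M * adi_Z n r \<alpha> v j) $$ (p,m) * adi_g r \<alpha> j $$ (m,c))"
    by (rule index_mult'[OF MZ g_carrier p c])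
  also have "\<dots> = (\<Sum>i<j. (M * adi_Z n r \<alpha> v j) $$ (p, i*r + c mod r) * mat j 1 (\<lambda>(i,_). gam \<alpha> (i+1)) $$ (i, c div r))"
    unfolding adi_g_def by (rule sum_kron[OF gcol_carrier]) (use c in simp)
  also have "\<dots> = (\<Sum>i<j. (gam \<alpha> (i+1))^2 * (M * v (i+1)) $$ (p,c))"
  proof (intro sum.cong refl)
    fix i assume i: "i \<in> {..<j}"
    have q: "i*r + c < j*r" using i c by (intro blk_lt) auto
    show "(M * adi_Z n r \<alpha> v j) $$ (p, i*r + c mod r) * mat j 1 (\<lambda>(i,_). gam \<alpha> (i+1)) $$ (i, c div r) = (gam \<alpha> (i+1))^2 * (M * v (i+1)) $$ (p,c)"
      using XZ[OF M vc p q, of \<alpha>] blk_divmod[OF c, of i] c i by (simp add: power2_eq_square)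
  qed
  also have "\<dots> = (adi_w M B \<alpha> v j - B) $$ (p,c)"
    using w_idx[OF M B vc p c, of j \<alpha>] w_carrier[OF M B vc, of j \<alpha>] B p c by simp
  finally show "(M * adi_Z n r \<alpha> v j * adi_g r \<alpha> j) $$ (p,c) = (adi_w M B \<alpha> v j - B) $$ (p,c)" .
qed (use B M in auto)

lemma main1: assumes A: "A \<in> carrier_mat n n" and M: "M \<in> carrier_mat n n" and B: "B \<in> carrier_mat n r"
  and neg: "\<forall>i\<in>{1..j}. Re (\<alpha> i) < 0"
  and vc: "\<forall>i\<in>{1..j}. v i \<in> carrier_mat n r"
  shows "A * adi_Z n r \<alpha> v j = M * adi_Z n r \<alpha> v j * adi_T r \<alpha> j + adi_w M B \<alpha> v j * adj (adi_g r \<alpha> j)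
     - adi_S n r A M B \<alpha> v j * adi_Gamma r \<alpha> j"
proof (rule eq_matI)
  let ?Z = "adi_Z n r \<alpha> v j" and ?w = "adi_w M B \<alpha> v j" and ?S = "adi_S n r A M B \<alpha> v j"
  have wc: "?w \<in> carrier_mat n r" using w_carrier[OF M B vc, of j \<alpha>] by simp
  fix p q assume "p < dim_row (M * ?Z * adi_T r \<alpha> j + ?w * adj (adi_g r \<alpha> j) - ?S * adi_Gamma r \<alpha> j)"
     "q < dim_col (M * ?Z * adi_T r \<alpha> j + ?w * adj (adi_g r \<alpha> j) - ?S * adi_Gamma r \<alpha> j)"
  then have p: "p < n" and q: "q < j*r" by auto
  note d = divmod_facts[OF q]
  define k where "k = q div r"
  define c where "c = q mod r"
  have k: "k < j" and c: "c < r" using d k_def c_def by auto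
  have qkc: "q = k*r + c" unfolding k_def c_def by simp
  define g where "g = (\<lambda>i. gam \<alpha> (i+1))"
  define a where "a = (\<lambda>i. (M * v (i+1)) $$ (p,c))"
  define x where "x = (A * v (k+1)) $$ (p,c)"
  define b where "b = B $$ (p,c)"
  have MZ: "M * ?Z \<in> carrier_mat n (j*r)" using M by simp
  have L: "(A * ?Z) $$ (p,q) = g k * x"
    using XZ[OF A vc p q, of \<alpha>] unfolding g_def x_def k_def c_def by simp
  have E2: "(M * ?Z * adi_T r \<alpha> j) $$ (p,q) = (\<Sum>i<j. g i * a i * (if i = k then cnj (\<alpha> (k+1)) else if k < i then - (g i * g k) else 0))"
  proof -
    have "(M * ?Z * adi_T r \<alpha> j) $$ (p,q) = (\<Sum>m<j*r. (M * ?Z) $$ (p,m) * adi_T r \<alpha> j $$ (m,q))"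
      by (rule index_mult'[OF MZ T_carrier p q])
    also have "\<dots> = (\<Sum>i<j. (M * ?Z) $$ (p, i*r + q mod r) * Ttil \<alpha> j $$ (i, q div r))"
      unfolding adi_T_def by (rule sum_kron[OF Ttil_carrier q])
    also have "\<dots> = (\<Sum>i<j. g i * a i * (if i = k then cnj (\<alpha> (k+1)) else if k < i then - (g i * g k) else 0))"
    proof (intro sum.cong refl)
      fix i assume i: "i \<in> {..<j}"
      have iq: "i*r + c < j*r" using i c by (intro blk_lt) auto
      show "(M * ?Z) $$ (p, i*r + q mod r) * Ttil \<alpha> j $$ (i, q div r) = g i * a i * (if i = k then cnj (\<alpha> (k+1)) else if k < i then - (g i * g k) else 0)"
        using XZ[OF M vc p iq, of \<alpha>] blk_divmod[OF c, of i] i k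
        unfolding k_def[symmetric] c_def[symmetric] by (simp add: Ttil_def g_def a_def)
    qed
    finally show ?thesis .
  qed
  have E3: "(?w * adj (adi_g r \<alpha> j)) $$ (p,q) = ?w $$ (p,c) * g k"
  proof -
    have "(?w * adj (adi_g r \<alpha> j)) $$ (p,q) = (\<Sum>l<r. ?w $$ (p,l) * adj (adi_g r \<alpha> j) $$ (l,q))"
      by (rule index_mult'[OF wc adj_carrier[OF g_carrier] p q])
    also have "\<dots> = (\<Sum>l<r. if l = c then ?w $$ (p,c) * g k else 0)"
      by (intro sum.cong refl) (use q in \<open>auto simp: g_idx g_def k_def c_def\<close>)
    also have "\<dots> = ?w $$ (p,c) * g k" using c by simp
    finally show ?thesis .
  qed
  have E4: "(?S * adi_Gamma r \<alpha> j) $$ (p,q) = adi_s A M B \<alpha> v (k+1) $$ (p,c) * g k"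
  proof -
    have "(?S * adi_Gamma r \<alpha> j) $$ (p,q) = (\<Sum>m<j*r. ?S $$ (p,m) * adi_Gamma r \<alpha> j $$ (m,q))"
      by (rule index_mult'[OF S_carrier Gamma_carrier p q])
    also have "\<dots> = (\<Sum>i<j. ?S $$ (p, i*r + q mod r) * mat j j (\<lambda>(i,k). if i = k then gam \<alpha> (i+1) else 0) $$ (i, q div r))"
      unfolding adi_Gamma_def by (rule sum_kron[OF Gd_carrier q])
    also have "\<dots> = (\<Sum>i<j. if i = k then ?S $$ (p, q) * g k else 0)"
      by (intro sum.cong refl) (use k in \<open>auto simp: g_def k_def c_def\<close>)
    also have "\<dots> = ?S $$ (p,q) * g k" using k by simp
    also have "\<dots> = adi_s A M B \<alpha> v (k+1) $$ (p,c) * g k"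
      using S_idx[OF p q] unfolding k_def c_def by simp
    finally show ?thesis .
  qed
  have W: "?w $$ (p,c) = b + (\<Sum>i<j. (g i)^2 * a i)"
    using w_idx[OF M B vc p c, of j \<alpha>] unfolding b_def g_def a_def by simp
  have Sx: "adi_s A M B \<alpha> v (k+1) $$ (p,c) = b + (\<Sum>i<k. (g i)^2 * a i) - x - \<alpha> (k+1) * a k"
    using s_idx[OF A M B vc k p c, of \<alpha>] w_idx[OF M B vc p c, of k \<alpha>] k unfolding b_def g_def a_def x_def by simp
  have key: "cnj (\<alpha> (k+1)) + (g k)^2 + \<alpha> (k+1) = 0"
  proof -
    have "k + 1 \<in> {1..j}" using k by auto
    then have "Re (\<alpha> (k+1)) < 0" using neg by blast
    then show ?thesis unfolding g_def by (intro gam_sq) simp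
  qed
  have R: "(M * ?Z * adi_T r \<alpha> j + ?w * adj (adi_g r \<alpha> j) - ?S * adi_Gamma r \<alpha> j) $$ (p,q)
     = (M * ?Z * adi_T r \<alpha> j) $$ (p,q) + (?w * adj (adi_g r \<alpha> j)) $$ (p,q) - (?S * adi_Gamma r \<alpha> j) $$ (p,q)"
    using p q wc by simp
  show "(A * ?Z) $$ (p,q) = (M * ?Z * adi_T r \<alpha> j + ?w * adj (adi_g r \<alpha> j) - ?S * adi_Gamma r \<alpha> j) $$ (p,q)"
    unfolding R L E2 E3 E4 W Sx by (rule scal[where g=g and a=a and al="\<alpha> (k+1)" and x=x and b=b, OF k key])
qed (use A in auto)

theorem theorem3p2:
  fixes A M B :: "real mat" and n r j :: nat
    and \<alpha> :: "nat \<Rightarrow> complex" and v :: "nat \<Rightarrow> complex mat"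
  assumes "A \<in> carrier_mat n n" and "M \<in> carrier_mat n n" and "invertible_mat M"
    and "B \<in> carrier_mat n r"
    and "\<forall>i\<in>{1..j}. Re (\<alpha> i) < 0"
    and "\<forall>i\<in>{1..j}. v i \<in> carrier_mat n r"
  shows
   "let cA = cmat A; cM = cmat M; cB = cmat B;
        Z = adi_Z n r \<alpha> v j; S = adi_S n r cA cM cB \<alpha> v j;
        w = adi_w cM cB \<alpha> v j; \<Gamma> = adi_Gamma r \<alpha> j
    in cA * Z = cM * Z * adi_T r \<alpha> j + w * adj (adi_g r \<alpha> j) - S * \<Gamma>
     \<and> cA * Z * adj Z * adj cM + cM * Z * adj Z * adj cA + cB * adj cB
         = - (S * \<Gamma> * adj Z * adj cM) - cM * Z * \<Gamma> * adj S + w * adj w"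
  proof -
  note neg = assms(5) and vc = assms(6)
  define cA where "cA = cmat A"
  define cM where "cM = cmat M"
  define cB where "cB = cmat B"
  define Z where "Z = adi_Z n r \<alpha> v j"
  define S where "S = adi_S n r cA cM cB \<alpha> v j"
  define w where "w = adi_w cM cB \<alpha> v j"
  define Gm where "Gm = adi_Gamma r \<alpha> j"
  have cAc: "cA \<in> carrier_mat n n" using assms(1) by (simp add: cA_def cmat_def)
  have cMc: "cM \<in> carrier_mat n n" using assms(2) by (simp add: cM_def cmat_def)
  have cBc: "cB \<in> carrier_mat n r" using assms(4) by (simp add: cB_def cmat_def)
  have Zc: "Z \<in> carrier_mat n (j*r)" by (simp add: Z_def)
  have Sc: "S \<in> carrier_mat n (j*r)" by (simp add: S_def)
  have wc: "w \<in> carrier_mat n r" using w_carrier[OF cMc cBc vc, of j \<alpha>] by (simp add: w_def)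
  have Gc: "Gm \<in> carrier_mat (j*r) (j*r)" by (simp add: Gm_def)
  have e1: "cA * Z = cM * Z * adi_T r \<alpha> j + w * adj (adi_g r \<alpha> j) - S * Gm"
    unfolding Z_def w_def S_def Gm_def by (rule main1[OF cAc cMc cBc neg vc])
  have PZ: "cM * Z \<in> carrier_mat n (j*r)" using cMc Zc by simp
  have AZ: "cA * Z \<in> carrier_mat n (j*r)" using cAc Zc by simp
  have e2: "cA * Z * adj (cM * Z) + cM * Z * adj (cA * Z) + cB * adj cB
      = - (S * Gm * adj (cM * Z)) - cM * Z * Gm * adj S + w * adj w"
    by (rule alg[OF PZ T_carrier g_carrier Gc Sc wc cBc e1 T_adj[OF neg] _ _])
      (simp_all add: Z_def w_def PG[OF cMc cBc vc] Gm_def Gamma_adj)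
  have e3: "cA * Z * adj Z * adj cM + cM * Z * adj Z * adj cA + cB * adj cB
      = - (S * Gm * adj Z * adj cM) - cM * Z * Gm * adj S + w * adj w"
  proof -
    have a1: "adj (cM * Z) = adj Z * adj cM" by (rule adj_mult[OF cMc Zc])
    have a2: "adj (cA * Z) = adj Z * adj cA" by (rule adj_mult[OF cAc Zc])
    have s1: "cA * Z * (adj Z * adj cM) = cA * Z * adj Z * adj cM"
      by (rule assoc_mult_mat[OF AZ adj_carrier[OF Zc] adj_carrier[OF cMc], symmetric])
    have s2: "cM * Z * (adj Z * adj cA) = cM * Z * adj Z * adj cA"
      by (rule assoc_mult_mat[OF PZ adj_carrier[OF Zc] adj_carrier[OF cAc], symmetric])
    have s3: "S * Gm * (adj Z * adj cM) = S * Gm * adj Z * adj cM"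
      by (rule assoc_mult_mat[OF mult_carrier_mat[OF Sc Gc] adj_carrier[OF Zc] adj_carrier[OF cMc], symmetric])
    show ?thesis using e2 unfolding a1 a2 s1 s2 s3 .
  qed
  show ?thesis
    unfolding Let_def using e1 e3
    unfolding cA_def[symmetric] cM_def[symmetric] cB_def[symmetric] Z_def[symmetric] S_def[symmetric]
      w_def[symmetric] Gm_def[symmetric] by simp
qed

end
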